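(* Let $\mathbf{A}\in\mathbb{C}^{n\times n}$, let $\mathbf{b}\in\mathbb{C}^n$ be nonzero, and let $k\geq 1$ be such that the Arnoldi algorithm applied to $(\mathbf{A},\mathbf{b})$ does not break down before step $k$, i.e. $\dim\mathcal{K}_{k+1}(\mathbf{A},\mathbf{b})=k+1$. Then \[ \min_{0\leq j\leq k}\|\mathbf{r}_j^{\mathrm{F}}\|_2 \;\leq\; \sqrt{k+1}\,\cdot\,\|\mathbf{r}_k^{\mathrm{G}}\|_2 . \]
   Context: The Krylov subspace is $\mathcal{K}_k(\mathbf{A},\mathbf{b})=\operatorname{span}\{\mathbf{b},\mathbf{A}\mathbf{b},\dots,\mathbf{A}^{k-1}\mathbf{b}\}$. The Arnoldi algorithm produces an orthonormal basis $\mathbf{Q}_k=[\mathbf{q}_1,\dots,\mathbf{q}_k]$ of $\mathcal{K}_k(\mathbf{A},\mathbf{b})$ with $\mathbf{q}_1=\mathbf{b}/\|\mathbf{b}\|_2$, and a $(k+1)\times k$ upper Hessenberg matrix $\mathbf{H}_{k+1,k}$ (entries $h_{i,j}$, with $h_{j+1,j}>0$) satisfying $\mathbf{A}\mathbf{Q}_k=\mathbf{Q}_{k+1}\mathbf{H}_{k+1,k}$; $\mathbf{H}_k$ denotes $\mathbf{H}_{k+1,k}$ with its last row deleted. With $\mathbf{e}_1=[1,0,\dots,0]^{\mathsf T}$, the FOM and GMRES iterates (zero initial guess, $\mathbf{x}_0^{\mathrm F}=\mathbf{x}_0^{\mathrm G}=\mathbf{0}$) are, for $j\ge1$, $\mathbf{x}_j^{\mathrm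 F}=\|\mathbf{b}\|_2\mathbf{Q}_j\mathbf{H}_j^{-1}\mathbf{e}_1$ and $\mathbf{x}_j^{\mathrm G}=\|\mathbf{b}\|_2\mathbf{Q}_j\mathbf{H}_{j+1,j}^{\dagger}\mathbf{e}_1$ ($\dagger$ = pseudoinverse); equivalently $\mathbf{x}_j^{\mathrm G}$ minimizes $\|\mathbf{b}-\mathbf{A}\mathbf{x}\|_2$ over $\mathbf{x}\in\mathcal{K}_j(\mathbf{A},\mathbf{b})$. Residuals: $\mathbf{r}_j^{\mathrm F}=\mathbf{b}-\mathbf{A}\mathbf{x}_j^{\mathrm F}$, $\mathbf{r}_j^{\mathrm G}=\mathbf{b}-\mathbf{A}\mathbf{x}_j^{\mathrm G}$ (so $\mathbf{r}_0^{\mathrm F}=\mathbf{r}_0^{\mathrm G}=\mathbf{b}$). Convention: if $\mathbf{H}_j$ is singular, the FOM iterate is undefined and $\|\mathbf{r}_j^{\mathrm F}\|_2$ is defined to be $+\infty$. *)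

theory Defs
  imports "HOL-Analysis.Analysis" "HOL-Library.Extended_Real"
begin

text \<open>Indices are 0-based: q_0..q_k are the Arnoldi vectors (paper's q_1..q_{k+1}),
  H r c is the paper's h_{r+1,c+1}.\<close>

definition cinner :: "complex^'n \<Rightarrow> complex^'n \<Rightarrow> complex" where
  "cinner x y = (\<Sum>i\<in>UNIV. x $ i * cnj (y $ i))"

definition kvec :: "complex^'n^'n \<Rightarrow> complex^'n \<Rightarrow> nat \<Rightarrow> complex^'n" where
  "kvec A b i = ((\<lambda>x. A *v x) ^^ i) b"

definition krylov :: "complex^'n^'n \<Rightarrow> complex^'n \<Rightarrow> nat \<Rightarrow> (complex^'n) set" where
  "krylov A b m = {x. \<exists>c::nat \<Rightarrow> complex. x = (\<Sum>i<m. c i *s kvec A b i)}"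

definition krylov_full_dim :: "complex^'n^'n \<Rightarrow> complex^'n \<Rightarrow> nat \<Rightarrow> bool" where
  "krylov_full_dim A b m \<longleftrightarrow>
     (\<forall>c::nat \<Rightarrow> complex. (\<Sum>i<m. c i *s kvec A b i) = 0 \<longrightarrow> (\<forall>i<m. c i = 0))"

text \<open>Q, H is the output of k steps of Arnoldi on (A,b):
  orthonormal q_0..q_k, q_0 = b/||b||, H (k+1) x k upper Hessenberg with positive real
  subdiagonal, and A Q_k = Q_{k+1} H_{k+1,k}.\<close>
definition arnoldi :: "complex^'n^'n \<Rightarrow> complex^'n \<Rightarrow> nat \<Rightarrow> (nat \<Rightarrow> complex^'n)
    \<Rightarrow> (nat \<Rightarrow> nat \<Rightarrow> complex) \<Rightarrow> bool" where
  "arnoldi A b k Q H \<longleftrightarrow>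
     Q 0 = (complex_of_real (1 / norm b)) *s b \<and>
     (\<forall>i\<le>k. \<forall>j\<le>k. cinner (Q i) (Q j) = (if i = j then 1 else 0)) \<and>
     (\<forall>c<k. \<forall>r\<le>k. c + 1 < r \<longrightarrow> H r c = 0) \<and>
     (\<forall>c<k. H (c+1) c \<in> \<real> \<and> Re (H (c+1) c) > 0) \<and>
     (\<forall>c<k. A *v Q c = (\<Sum>r\<le>k. H r c *s Q r))"

definition Hsingular :: "(nat \<Rightarrow> nat \<Rightarrow> complex) \<Rightarrow> nat \<Rightarrow> bool" where
  "Hsingular H j \<longleftrightarrow> (\<exists>y::nat \<Rightarrow> complex. (\<exists>c<j. y c \<noteq> 0) \<and>
        (\<forall>r<j. (\<Sum>c<j. H r c * y c) = 0))"

definition fom_coeffs :: "complex^'n \<Rightarrow> (nat \<Rightarrow> nat \<Rightarrow> complex) \<Rightarrow> nat \<Rightarrow> nat \<Rightarrow> complex" where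
  "fom_coeffs b H j = (THE y. (\<forall>c. j \<le> c \<longrightarrow> y c = 0) \<and>
        (\<forall>r<j. (\<Sum>c<j. H r c * y c) = (if r = 0 then complex_of_real (norm b) else 0)))"

definition fom_iterate :: "complex^'n \<Rightarrow> (nat \<Rightarrow> complex^'n) \<Rightarrow> (nat \<Rightarrow> nat \<Rightarrow> complex)
    \<Rightarrow> nat \<Rightarrow> complex^'n" where
  "fom_iterate b Q H j = (\<Sum>c<j. fom_coeffs b H j c *s Q c)"

definition fom_resnorm :: "complex^'n^'n \<Rightarrow> complex^'n \<Rightarrow> (nat \<Rightarrow> complex^'n)
    \<Rightarrow> (nat \<Rightarrow> nat \<Rightarrow> complex) \<Rightarrow> nat \<Rightarrow> ereal" where
  "fom_resnorm A b Q H j =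
     (if j = 0 then ereal (norm b)
      else if Hsingular H j then \<infinity>
      else ereal (norm (b - A *v fom_iterate b Q H j)))"

definition gmres_resnorm :: "complex^'n^'n \<Rightarrow> complex^'n \<Rightarrow> nat \<Rightarrow> real" where
  "gmres_resnorm A b j = Inf ((\<lambda>x. norm (b - A *v x)) ` krylov A b j)"

end

theory Submission
  imports Defs "Jordan_Normal_Form.Determinant"
begin


lemma mv_scale: fixes A :: "complex^'n^'m" shows "A *v (c *s x) = c *s (A *v x)"
  by (simp add: Finite_Cartesian_Product.vec_eq_iff matrix_vector_mult_def sum_distrib_left algebra_simps)

lemma mv_sum: fixes A :: "complex^'n^'m" shows "A *v (\<Sum>i\<in>S. f i) = (\<Sum>i\<in>S. A *v f i)"
proof (induction S rule: infinite_finite_induct)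
  case (insert x F) then show ?case by (simp add: matrix_vector_right_distrib)
qed (simp_all add: Finite_Cartesian_Product.vec_eq_iff matrix_vector_mult_def)

lemma swap_vec:
  fixes Q :: "nat \<Rightarrow> complex^'n"
  shows "(\<Sum>c\<in>S. z c *s (\<Sum>r\<in>T. H r c *s Q r)) = (\<Sum>r\<in>T. (\<Sum>c\<in>S. H r c * z c) *s Q r)"
proof -
  have "\<And>i. (\<Sum>c\<in>S. z c * (\<Sum>r\<in>T. H r c * Q r $ i)) = (\<Sum>r\<in>T. (\<Sum>c\<in>S. H r c * z c) * Q r $ i)"
  proof -
    fix i
    have "(\<Sum>c\<in>S. z c * (\<Sum>r\<in>T. H r c * Q r $ i)) = (\<Sum>c\<in>S. \<Sum>r\<in>T. H r c * z c * Q r $ i)"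
      by (simp add: sum_distrib_left mult_ac)
    also have "\<dots> = (\<Sum>r\<in>T. \<Sum>c\<in>S. H r c * z c * Q r $ i)" by (rule sum.swap)
    also have "\<dots> = (\<Sum>r\<in>T. (\<Sum>c\<in>S. H r c * z c) * Q r $ i)" by (simp add: sum_distrib_right)
    finally show "?thesis i" .
  qed
  then show ?thesis by (simp add: Finite_Cartesian_Product.vec_eq_iff)
qed

lemma cinner_sum_left: "cinner (\<Sum>s\<in>S. f s) y = (\<Sum>s\<in>S. cinner (f s) y)"
  unfolding cinner_def by (simp add: sum_distrib_right) (rule sum.swap)

lemma cinner_sum_right: "cinner x (\<Sum>s\<in>S. f s) = (\<Sum>s\<in>S. cinner x (f s))"
  unfolding cinner_def by (simp add: sum_distrib_left cnj_sum) (rule sum.swap)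

lemma cinner_scale_left: "cinner (c *s x) y = c * cinner x y"
  unfolding cinner_def by (simp add: sum_distrib_left mult.assoc)

lemma cinner_scale_right: "cinner x (c *s y) = cnj c * cinner x y"
  unfolding cinner_def by (simp add: sum_distrib_left mult_ac)

lemma cinner_diff_left: "cinner (x - y) z = cinner x z - cinner y z"
  unfolding cinner_def by (simp add: left_diff_distrib sum_subtractf)

lemma cinner_self: "cinner x x = complex_of_real ((norm x)^2)"
proof -
  have "(norm x)^2 = (\<Sum>i\<in>UNIV. (cmod (x$i))^2)" unfolding norm_vec_def L2_set_def
    by (simp add: sum_nonneg)
  have "(\<Sum>i\<in>UNIV. x$i * cnj (x$i)) = (\<Sum>i\<in>UNIV. complex_of_real ((cmod (x$i))^2))"
    by (intro sum.cong refl) (rule complex_norm_square[symmetric])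
  also have "\<dots> = complex_of_real (\<Sum>i\<in>UNIV. (cmod (x$i))^2)" by (rule of_real_sum[symmetric])
  finally show ?thesis unfolding cinner_def using \<open>(norm x)^2 = _\<close> by simp
qed

lemma cinner_cs: "cmod (cinner x y) \<le> norm x * norm y"
proof -
  have "cmod (cinner x y) \<le> (\<Sum>i\<in>UNIV. cmod (x$i) * cmod (y$i))" unfolding cinner_def
    by (rule order_trans[OF norm_sum]) (simp add: norm_mult)
  also have "\<dots> \<le> L2_set (\<lambda>i. cmod (x$i)) UNIV * L2_set (\<lambda>i. cmod (y$i)) UNIV"
    using L2_set_mult_ineq[where f="\<lambda>i. cmod (x$i)" and A=UNIV and g="\<lambda>i. cmod (y$i)"] by simp
  finally show ?thesis by (simp add: norm_vec_def)
qed

lemma norm_smult: "norm (c *s x) = cmod c * norm (x::complex^'n)"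
proof -
  have e1: "cinner (c *s x) (c *s x) = (c * cnj c) * cinner x x"
    by (simp add: cinner_scale_left cinner_scale_right mult_ac)
  have "complex_of_real ((norm (c *s x))^2) = complex_of_real ((cmod c)^2 * (norm x)^2)"
    using e1 by (simp only: of_real_mult complex_norm_square cinner_self[symmetric])
  then have "complex_of_real ((norm (c *s x))^2) = complex_of_real ((cmod c * norm x)^2)"
    by (simp add: power_mult_distrib)
  then have "(norm (c *s x))^2 = (cmod c * norm x)^2" using of_real_eq_iff by blast
  then show ?thesis by (simp add: power2_eq_iff_nonneg)
qed

lemma orth_coef:
  fixes k :: nat and Q :: "nat \<Rightarrow> complex^'n"
  assumes orth: "\<forall>i\<le>k. \<forall>j\<le>k. cinner (Q i) (Q j) = (if i = j then 1 else 0)" and r: "r \<le> k"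
  shows "cinner (Q r) (\<Sum>s\<le>k. w s *s Q s) = cnj (w r)"
proof -
  have "cinner (Q r) (\<Sum>s\<le>k. w s *s Q s) = (\<Sum>s\<le>k. cnj (w s) * cinner (Q r) (Q s))"
    unfolding cinner_sum_right cinner_scale_right by (rule refl)
  also have "\<dots> = (\<Sum>s\<le>k. (if s = r then cnj (w s) else 0))"
    by (intro sum.cong) (auto simp: orth r)
  also have "\<dots> = cnj (w r)" using r sum.delta[of "{..k}" r "\<lambda>s. cnj (w s)"] by simp
  finally show ?thesis .
qed

lemma v_exists:
  fixes h :: "nat \<Rightarrow> nat \<Rightarrow> complex"
  assumes "\<forall>c<k. h (Suc c) c \<noteq> 0"
  shows "n \<le> k \<Longrightarrow> \<exists>v. v 0 = 1 \<and> (\<forall>c<n. (\<Sum>r\<le>Suc c. v r * h r c) = 0)"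
proof (induction n)
  case 0 show ?case by (intro exI[of _ "\<lambda>_. 1"]) simp
next
  case (Suc n)
  then obtain v where v: "v 0 = 1" "\<forall>c<n. (\<Sum>r\<le>Suc c. v r * h r c) = 0" by auto
  define v' where "v' = v(Suc n := - (\<Sum>r\<le>n. v r * h r n) / h (Suc n) n)"
  have hn: "h (Suc n) n \<noteq> 0" using assms Suc.prems by auto
  have "\<forall>c<Suc n. (\<Sum>r\<le>Suc c. v' r * h r c) = 0"
  proof (intro allI impI)
    fix c assume c: "c < Suc n"
    show "(\<Sum>r\<le>Suc c. v' r * h r c) = 0"
    proof (cases "c < n")
      case True
      then have "(\<Sum>r\<le>Suc c. v' r * h r c) = (\<Sum>r\<le>Suc c. v r * h r c)"
        by (intro sum.cong) (auto simp: v'_def)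
      with True v show ?thesis by simp
    next
      case False then have cn: "c = n" using c by simp
      have "(\<Sum>r\<le>Suc n. v' r * h r n) = (\<Sum>r\<le>n. v' r * h r n) + v' (Suc n) * h (Suc n) n" by simp
      also have "(\<Sum>r\<le>n. v' r * h r n) = (\<Sum>r\<le>n. v r * h r n)"
        by (intro sum.cong) (auto simp: v'_def)
      finally show ?thesis using hn cn by (simp add: v'_def)
    qed
  qed
  moreover have "v' 0 = 1" using v by (simp add: v'_def)
  ultimately show ?case by blast
qed

lemma hess_col:
  fixes H :: "nat \<Rightarrow> nat \<Rightarrow> complex"
  assumes hess: "\<forall>c<k. \<forall>r\<le>k. c + 1 < r \<longrightarrow> H r c = 0"
    and J: "1 \<le> J" "J \<le> r" "r \<le> k"
  shows "(\<Sum>c<J. H r c * y c) = (if r = J then H J (J-1) * y (J-1) else 0)"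
proof -
  have z: "H r c = 0" if "c < J" "c \<noteq> J - 1 \<or> r \<noteq> J" for c
    using hess that J by auto
  show ?thesis
  proof (cases "r = J")
    case True
    have "(\<Sum>c<J. H r c * y c) = H r (J-1) * y (J-1) + (\<Sum>c\<in>{..<J}-{J-1}. H r c * y c)"
      using J by (subst sum.remove[of _ "J-1"]) auto
    also have "(\<Sum>c\<in>{..<J}-{J-1}. H r c * y c) = 0" using z by (intro sum.neutral) auto
    finally show ?thesis using True by simp
  next
    case False then show ?thesis using z by (simp add: sum.neutral)
  qed
qed

lemma two_delta:
  fixes v :: "nat \<Rightarrow> 'a::comm_ring_1"
  assumes "J \<noteq> 0" "J \<le> k"
  shows "(\<Sum>r\<le>k. v r * (if r = 0 then a else if r = J then t else 0)) = v 0 * a + v J * t"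
proof -
  have "(\<Sum>r\<le>k. v r * (if r = 0 then a else if r = J then t else 0))
      = (\<Sum>r\<le>k. (if r = 0 then v 0 * a else 0) + (if r = J then v J * t else 0))"
    using assms by (intro sum.cong) auto
  also have "\<dots> = v 0 * a + v J * t" using assms by (simp add: sum.distrib)
  finally show ?thesis .
qed

lemma two_delta_vec:
  fixes Q :: "nat \<Rightarrow> complex^'n"
  assumes "J \<noteq> 0" "J \<le> k"
  shows "(\<Sum>r\<le>k. (if r = 0 then a else if r = J then t else 0) *s Q r) = a *s Q 0 + t *s Q J"
proof -
  have "(\<Sum>r\<le>k. (if r = 0 then a else if r = J then t else 0) *s Q r)
      = (\<Sum>r\<le>k. (if r = 0 then a *s Q 0 else 0) + (if r = J then t *s Q J else 0))"
    using assms by (intro sum.cong) auto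
  also have "\<dots> = a *s Q 0 + t *s Q J" using assms by (simp add: sum.distrib)
  finally show ?thesis .
qed



lemma square_solve:
  fixes M :: "nat \<Rightarrow> nat \<Rightarrow> complex" and rhs :: "nat \<Rightarrow> complex"
  assumes inj: "\<And>y. (\<forall>r<n. (\<Sum>c<n. M r c * y c) = 0) \<Longrightarrow> (\<forall>c<n. y c = 0)"
  shows "\<exists>z. \<forall>r<n. (\<Sum>c<n. M r c * z c) = rhs r"
proof -
  define M' where "M' = mat n n (\<lambda>(i,j). M i j)"
  have M'c: "M' \<in> carrier_mat n n" unfolding M'_def by simp
  have mv: "(M' *\<^sub>v v) $ r = (\<Sum>c<n. M r c * v $ c)" if "v \<in> carrier_vec n" "r < n" for v r
    using that unfolding M'_def by (auto simp: scalar_prod_def row_def lessThan_atLeast0 intro!: sum.cong)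
  have "det M' \<noteq> 0"
  proof
    assume "det M' = 0"
    then obtain v where v: "v \<in> carrier_vec n" "v \<noteq> 0\<^sub>v n" "M' *\<^sub>v v = 0\<^sub>v n"
      using det_0_iff_vec_prod_zero[OF M'c] by auto
    have "\<forall>r<n. (\<Sum>c<n. M r c * v $ c) = 0" using v mv by (metis index_zero_vec(1))
    then have "\<forall>c<n. v $ c = 0" using inj by blast
    then have "v = 0\<^sub>v n" using v(1) by (intro eq_vecI) auto
    with v show False by simp
  qed
  then have "M' \<in> Units (ring_mat TYPE(complex) n ())" by (rule det_non_zero_imp_unit[OF M'c])
  then obtain B where B: "B \<in> carrier_mat n n" "M' * B = 1\<^sub>m n"
    unfolding Units_def ring_mat_def by auto
  define e where "e = vec n rhs"
  define zv where "zv = B *\<^sub>v e"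
  have zc: "zv \<in> carrier_vec n" unfolding zv_def e_def using B by simp
  have "M' *\<^sub>v zv = e" unfolding zv_def
    using B M'c by (simp add: assoc_mult_mat_vec[symmetric, of _ n n _ n] e_def)
  then have "\<forall>r<n. (\<Sum>c<n. M r c * zv $ c) = rhs r" using mv[OF zc] e_def by auto
  then show ?thesis by blast
qed


lemma cnj_mult_self: "cnj z * z = complex_of_real ((cmod z)^2)"
  using complex_norm_square[of z] by (simp add: mult.commute)

lemma arnoldi_unpack:
  assumes "arnoldi A b k Q H" "b \<noteq> 0"
  shows "b = complex_of_real (norm b) *s Q 0"
    and "\<forall>i\<le>k. \<forall>j\<le>k. cinner (Q i) (Q j) = (if i = j then 1 else 0)"
    and "\<forall>c<k. \<forall>r\<le>k. c + 1 < r \<longrightarrow> H r c = 0"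
    and "\<forall>c<k. H (Suc c) c \<noteq> 0"
    and "\<forall>c<k. A *v Q c = (\<Sum>r\<le>k. H r c *s Q r)"
proof -
  from assms(1) have Q0: "Q 0 = complex_of_real (1 / norm b) *s b"
    and sub: "\<forall>c<k. H (c+1) c \<in> \<real> \<and> Re (H (c+1) c) > 0"
    unfolding arnoldi_def by auto
  have nb: "norm b > 0" using assms(2) by simp
  show "b = complex_of_real (norm b) *s Q 0" using nb by (simp add: Q0 Finite_Cartesian_Product.vec_eq_iff)
  show "\<forall>c<k. H (Suc c) c \<noteq> 0"
  proof (intro allI impI)
    fix c assume "c < k"
    then have "Re (H (c+1) c) > 0" using sub by blast
    then show "H (Suc c) c \<noteq> 0" by auto
  qed
  show "\<forall>i\<le>k. \<forall>j\<le>k. cinner (Q i) (Q j) = (if i = j then 1 else 0)"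
    "\<forall>c<k. \<forall>r\<le>k. c + 1 < r \<longrightarrow> H r c = 0"
    "\<forall>c<k. A *v Q c = (\<Sum>r\<le>k. H r c *s Q r)" using assms(1) unfolding arnoldi_def by auto
qed

lemma krylov_rep:
  fixes A :: "complex^'n^'n" and b :: "complex^'n" and Q :: "nat \<Rightarrow> complex^'n"
  assumes b0: "b = complex_of_real (norm b) *s Q 0"
    and hess: "\<forall>c<k. \<forall>r\<le>k. c + 1 < r \<longrightarrow> H r c = 0"
    and AQ: "\<forall>c<k. A *v Q c = (\<Sum>r\<le>k. H r c *s Q r)"
  shows "i \<le> k \<Longrightarrow> \<exists>a. (\<forall>s. i < s \<longrightarrow> a s = 0) \<and> kvec A b i = (\<Sum>s\<le>k. a s *s Q s)"
proof (induction i)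
  case 0
  define \<beta> where "\<beta> = complex_of_real (norm b)"
  have "(\<Sum>s\<le>k. (if s = 0 then \<beta> else 0) *s Q s) = (\<Sum>s\<le>k. if s = 0 then \<beta> *s Q 0 else 0)"
    by (intro sum.cong) auto
  also have "\<dots> = \<beta> *s Q 0" by (subst sum.delta) auto
  finally have e: "(\<Sum>s\<le>k. (if s = 0 then \<beta> else 0) *s Q s) = b" using b0 \<beta>_def by simp
  show ?case by (intro exI[of _ "\<lambda>s. if s = 0 then \<beta> else 0"]) (simp add: kvec_def e)
next
  case (Suc i)
  then obtain a where a: "\<forall>s. i < s \<longrightarrow> a s = 0" "kvec A b i = (\<Sum>s\<le>k. a s *s Q s)" by auto
  have ik: "i < k" using Suc.prems by simp
  have "kvec A b (Suc i) = A *v kvec A b i" by (simp add: kvec_def)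
  also have "\<dots> = (\<Sum>s\<le>k. a s *s (A *v Q s))" by (simp add: a(2) mv_sum mv_scale)
  also have "\<dots> = (\<Sum>s\<le>k. a s *s (\<Sum>r\<le>k. H r s *s Q r))"
  proof (intro sum.cong refl)
    fix s assume "s \<in> {..k}"
    show "a s *s (A *v Q s) = a s *s (\<Sum>r\<le>k. H r s *s Q r)"
    proof (cases "s < k")
      case True then show ?thesis using AQ by simp
    next
      case False then have "a s = 0" using a(1) ik by simp
      then show ?thesis by (simp add: Finite_Cartesian_Product.vec_eq_iff)
    qed
  qed
  also have "\<dots> = (\<Sum>r\<le>k. (\<Sum>s\<le>k. H r s * a s) *s Q r)" by (rule swap_vec)
  also have "\<dots> = (\<Sum>r\<le>k. (if r \<le> k then (\<Sum>s\<le>k. H r s * a s) else 0) *s Q r)"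
    by (intro sum.cong) auto
  finally have eq: "kvec A b (Suc i) = (\<Sum>r\<le>k. (if r \<le> k then (\<Sum>s\<le>k. H r s * a s) else 0) *s Q r)" .
  have zero: "\<forall>r. Suc i < r \<longrightarrow> (if r \<le> k then (\<Sum>s\<le>k. H r s * a s) else 0) = 0"
  proof (intro allI impI)
    fix r assume r: "Suc i < r"
    show "(if r \<le> k then (\<Sum>s\<le>k. H r s * a s) else 0) = 0"
    proof (cases "r \<le> k")
      case True
      have "(\<Sum>s\<le>k. H r s * a s) = 0"
      proof (rule sum.neutral, rule ballI)
        fix s assume s: "s \<in> {..k}"
        show "H r s * a s = 0"
        proof (cases "i < s")
          case True then show ?thesis using a(1) by simp
        next
          case False then have "s < k" "s + 1 < r" using ik r by auto
          then show ?thesis using hess \<open>r \<le> k\<close> by simp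
        qed
      qed
      then show ?thesis using True by simp
    qed simp
  qed
  show ?case
    by (rule exI[of _ "\<lambda>r. if r \<le> k then (\<Sum>s\<le>k. H r s * a s) else 0"]) (use zero eq in blast)
qed

lemma fom_J:
  fixes A :: "complex^'n^'n" and b :: "complex^'n" and Q :: "nat \<Rightarrow> complex^'n"
    and H :: "nat \<Rightarrow> nat \<Rightarrow> complex" and v :: "nat \<Rightarrow> complex"
  assumes arn: "arnoldi A b k Q H" and bnz: "b \<noteq> 0"
    and v0: "v 0 = 1" and vrel: "\<forall>c<k. (\<Sum>r\<le>k. v r * H r c) = 0"
    and J: "1 \<le> J" "J \<le> k" and vJ: "v J \<noteq> 0"
  shows "fom_resnorm A b Q H J = ereal (norm b / cmod (v J))"
proof -
  define \<beta> where "\<beta> = complex_of_real (norm b)"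
  note U = arnoldi_unpack[OF arn bnz]
  have b0: "b = \<beta> *s Q 0" using U(1) \<beta>_def by simp
  note orth = U(2) and hess = U(3) and hsub = U(4) and AQ = U(5)
  have swapz: "(\<Sum>r\<le>k. v r * (\<Sum>c<J. H r c * y c)) = 0" for y
  proof -
    have "(\<Sum>r\<le>k. v r * (\<Sum>c<J. H r c * y c)) = (\<Sum>r\<le>k. \<Sum>c<J. v r * H r c * y c)"
      by (simp add: sum_distrib_left mult.assoc)
    also have "\<dots> = (\<Sum>c<J. \<Sum>r\<le>k. v r * H r c * y c)" by (rule sum.swap)
    also have "\<dots> = (\<Sum>c<J. y c * (\<Sum>r\<le>k. v r * H r c))" by (simp add: sum_distrib_left mult_ac)
    also have "\<dots> = 0" using vrel J by (intro sum.neutral) auto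
    finally show ?thesis .
  qed
  have col: "(\<Sum>c<J. H r c * y c) = (if r = J then H J (J-1) * y (J-1) else 0)"
    if "J \<le> r" "r \<le> k" for r y using hess_col[OF hess J(1) that] .
  have hJ: "H J (J-1) \<noteq> 0"
  proof -
    have "J - 1 < k" using J by simp
    then have "H (Suc (J-1)) (J-1) \<noteq> 0" using hsub by blast
    then show ?thesis using J by simp
  qed
  have nsing: "\<forall>c<J. y c = 0" if hy: "\<forall>r<J. (\<Sum>c<J. H r c * y c) = 0" for y
  proof (rule ccontr)
    assume nz: "\<not> (\<forall>c<J. y c = 0)"
    define S where "S = {c. c < J \<and> y c \<noteq> 0}"
    have fS: "finite S" unfolding S_def by (rule finite_subset[of _ "{..<J}"]) auto
    have neS: "S \<noteq> {}" using nz unfolding S_def by auto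
    define m where "m = Max S"
    have mS: "m \<in> S" using fS neS m_def Max_in by blast
    have mmax: "\<forall>c\<in>S. c \<le> m" using fS m_def by simp
    have mJ: "m < J" "y m \<noteq> 0" using mS S_def by auto
    have ybig: "y c = 0" if "m < c" "c < J" for c using mmax that S_def by force
    have mJ1: "m = J - 1"
    proof (rule ccontr)
      assume "m \<noteq> J - 1"
      then have sm: "Suc m < J" using mJ by simp
      have "(\<Sum>c<J. H (Suc m) c * y c) = (\<Sum>c<Suc m. H (Suc m) c * y c)"
        by (rule sum.mono_neutral_right) (use sm ybig in auto)
      also have "\<dots> = H (Suc m) m * y m" using hess_col[OF hess, of "Suc m" "Suc m" y] sm J by simp
      finally have "H (Suc m) m * y m = 0" using hy sm by simp
      then show False using hsub mJ sm J by auto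
    qed
    have "(\<Sum>r\<le>k. v r * (\<Sum>c<J. H r c * y c))
        = (\<Sum>r\<le>k. v r * (if r = 0 then 0 else if r = J then H J (J-1) * y (J-1) else 0))"
    proof (intro sum.cong refl)
      fix r assume r: "r \<in> {..k}"
      show "v r * (\<Sum>c<J. H r c * y c) = v r * (if r = 0 then 0 else if r = J then H J (J-1) * y (J-1) else 0)"
      proof (cases "r < J")
        case True then show ?thesis using hy J by auto
      next
        case False then show ?thesis using col[of r y] r J by auto
      qed
    qed
    also have "\<dots> = v 0 * 0 + v J * (H J (J-1) * y (J-1))" using J by (intro two_delta) auto
    finally have "v J * (H J (J-1) * y (J-1)) = 0" using swapz[of y] by simp
    then show False using vJ mJ mJ1 hJ by simp
  qed
  have "\<exists>z. \<forall>r<J. (\<Sum>c<J. H r c * z c) = (if r = 0 then \<beta> else 0)"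
    by (rule square_solve) (rule nsing)
  then obtain z0 where z0: "\<forall>r<J. (\<Sum>c<J. H r c * z0 c) = (if r = 0 then \<beta> else 0)" by blast
  define z where "z c = (if c < J then z0 c else 0)" for c
  have zz: "(\<Sum>c<J. H r c * z c) = (\<Sum>c<J. H r c * z0 c)" for r by (intro sum.cong) (auto simp: z_def)
  have zsol: "\<forall>r<J. (\<Sum>c<J. H r c * z c) = (if r = 0 then \<beta> else 0)" using z0 zz by simp
  have zJ: "\<forall>c. J \<le> c \<longrightarrow> z c = 0" by (simp add: z_def)
  have fc: "fom_coeffs b H J = z"
    unfolding fom_coeffs_def
  proof (rule the_equality)
    show "(\<forall>c. J \<le> c \<longrightarrow> z c = 0) \<and> (\<forall>r<J. (\<Sum>c<J. H r c * z c) = (if r = 0 then complex_of_real (norm b) else 0))"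
      using zJ zsol \<beta>_def by simp
  next
    fix y assume hy: "(\<forall>c. J \<le> c \<longrightarrow> y c = 0) \<and> (\<forall>r<J. (\<Sum>c<J. H r c * y c) = (if r = 0 then complex_of_real (norm b) else 0))"
    have dd: "\<forall>r<J. (\<Sum>c<J. H r c * (y c - z c)) = 0"
    proof (intro allI impI)
      fix r assume r: "r < J"
      have "(\<Sum>c<J. H r c * (y c - z c)) = (\<Sum>c<J. H r c * y c) - (\<Sum>c<J. H r c * z c)"
        by (simp add: right_diff_distrib sum_subtractf)
      also have "\<dots> = 0" using hy zsol r \<beta>_def by simp
      finally show "(\<Sum>c<J. H r c * (y c - z c)) = 0" .
    qed
    have d0: "\<forall>c<J. y c - z c = 0" using nsing[of "\<lambda>c. y c - z c"] dd by simp
    show "y = z"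
    proof
      fix c show "y c = z c"
      proof (cases "c < J")
        case True then show ?thesis using d0 by simp
      next
        case False then show ?thesis using hy zJ by simp
      qed
    qed
  qed
  define t where "t = H J (J-1) * z (J-1)"
  have gam: "(\<Sum>c<J. H r c * z c) = (if r = 0 then \<beta> else if r = J then t else 0)" if "r \<le> k" for r
  proof (cases "r < J")
    case True then show ?thesis using zsol by auto
  next
    case False then show ?thesis using col[of r z] that J t_def by auto
  qed
  have "A *v fom_iterate b Q H J = (\<Sum>c<J. z c *s (A *v Q c))" by (simp add: fom_iterate_def fc mv_sum mv_scale)
  also have "\<dots> = (\<Sum>c<J. z c *s (\<Sum>r\<le>k. H r c *s Q r))" using AQ J by (intro sum.cong) auto
  also have "\<dots> = (\<Sum>r\<le>k. (\<Sum>c<J. H r c * z c) *s Q r)" by (rule swap_vec)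
  also have "\<dots> = (\<Sum>r\<le>k. (if r = 0 then \<beta> else if r = J then t else 0) *s Q r)"
    using gam by (intro sum.cong) auto
  also have "\<dots> = \<beta> *s Q 0 + t *s Q J" using J by (intro two_delta_vec) auto
  finally have Ax: "A *v fom_iterate b Q H J = \<beta> *s Q 0 + t *s Q J" .
  have res: "b - A *v fom_iterate b Q H J = - (t *s Q J)" using Ax b0 by simp
  have "complex_of_real ((norm (Q J))^2) = 1" using orth J cinner_self[of "Q J"] by auto
  then have "(norm (Q J))^2 = 1" by (metis of_real_eq_1_iff)
  moreover have "norm (Q J) = sqrt ((norm (Q J))^2)" by simp
  ultimately have nQ: "norm (Q J) = 1" by simp
  have nres: "norm (b - A *v fom_iterate b Q H J) = cmod t" using res nQ by (simp add: norm_smult)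
  have "(\<Sum>r\<le>k. v r * (\<Sum>c<J. H r c * z c)) = (\<Sum>r\<le>k. v r * (if r = 0 then \<beta> else if r = J then t else 0))"
    using gam by (intro sum.cong) auto
  also have "\<dots> = v 0 * \<beta> + v J * t" using J by (intro two_delta) auto
  finally have "v J * t = - \<beta>" using swapz[of z] v0 by (simp add: add_eq_0_iff)
  then have "cmod (v J * t) = cmod \<beta>" by simp
  then have "cmod (v J) * cmod t = norm b" by (simp add: norm_mult \<beta>_def)
  then have ct: "cmod t = norm b / cmod (v J)" using vJ by (simp add: field_simps)
  have ns: "\<not> Hsingular H J"
  proof
    assume "Hsingular H J"
    then obtain y where y: "\<exists>c<J. y c \<noteq> 0" "\<forall>r<J. (\<Sum>c<J. H r c * y c) = 0"
      unfolding Hsingular_def by blast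
    then show False using nsing[of y] by blast
  qed
  show ?thesis unfolding fom_resnorm_def using J ns nres ct by simp
qed

lemma gmres_bound:
  fixes A :: "complex^'n^'n" and b :: "complex^'n" and Q :: "nat \<Rightarrow> complex^'n"
    and H :: "nat \<Rightarrow> nat \<Rightarrow> complex" and v :: "nat \<Rightarrow> complex"
  assumes arn: "arnoldi A b k Q H" and bnz: "b \<noteq> 0"
    and v0: "v 0 = 1" and vrel: "\<forall>c<k. (\<Sum>r\<le>k. v r * H r c) = 0"
    and J: "J \<le> k" and vmax: "\<forall>r\<le>k. cmod (v r) \<le> cmod (v J)"
    and x: "x \<in> krylov A b k"
  shows "norm b / (sqrt (real (k+1)) * cmod (v J)) \<le> norm (b - A *v x)"
proof -
  define \<beta> where "\<beta> = complex_of_real (norm b)"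
  note U = arnoldi_unpack[OF arn bnz]
  have b0: "b = \<beta> *s Q 0" using U(1) \<beta>_def by simp
  note orth = U(2) and hess = U(3) and hsub = U(4) and AQ = U(5)
  obtain c where xc: "x = (\<Sum>i<k. c i *s kvec A b i)" using x unfolding krylov_def by auto
  have "\<forall>i. \<exists>a. i \<le> k \<longrightarrow> ((\<forall>s. i < s \<longrightarrow> a s = 0) \<and> kvec A b i = (\<Sum>s\<le>k. a s *s Q s))"
    using krylov_rep[OF U(1) hess AQ] by blast
  then obtain aa where aa: "\<And>i. i \<le> k \<Longrightarrow> (\<forall>s. i < s \<longrightarrow> aa i s = 0) \<and> kvec A b i = (\<Sum>s\<le>k. aa i s *s Q s)"
    by metis
  define y where "y s = (\<Sum>i<k. aa i s * c i)" for s
  have "x = (\<Sum>i<k. c i *s (\<Sum>s\<le>k. aa i s *s Q s))"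
    unfolding xc
  proof (intro sum.cong refl)
    fix i assume "i \<in> {..<k}"
    then show "c i *s kvec A b i = c i *s (\<Sum>s\<le>k. aa i s *s Q s)" using aa[of i] by simp
  qed
  also have "\<dots> = (\<Sum>s\<le>k. y s *s Q s)" unfolding y_def by (rule swap_vec)
  finally have xy: "x = (\<Sum>s\<le>k. y s *s Q s)" .
  have yk: "y k = 0" unfolding y_def
  proof (rule sum.neutral, rule ballI)
    fix i assume "i \<in> {..<k}"
    then show "aa i k * c i = 0" using aa[of i] by simp
  qed
  define g where "g = (\<Sum>s\<le>k. cnj (v s) *s Q s)"
  have cg: "cinner (Q r) g = v r" if "r \<le> k" for r
    using orth_coef[OF orth that, of "\<lambda>s. cnj (v s)"] g_def by simp
  have cAQ: "cinner (A *v Q s) g = 0" if "s < k" for s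
  proof -
    have "cinner (A *v Q s) g = (\<Sum>r\<le>k. H r s * cinner (Q r) g)"
      using AQ that by (simp add: cinner_sum_left cinner_scale_left)
    also have "\<dots> = (\<Sum>r\<le>k. v r * H r s)" using cg by (intro sum.cong) (auto simp: mult.commute)
    also have "\<dots> = 0" using vrel that by simp
    finally show ?thesis .
  qed
  have "cinner (A *v x) g = (\<Sum>s\<le>k. y s * cinner (A *v Q s) g)"
    unfolding xy by (simp add: mv_sum mv_scale cinner_sum_left cinner_scale_left)
  also have "\<dots> = 0"
  proof (rule sum.neutral, rule ballI)
    fix s assume "s \<in> {..k}"
    then show "y s * cinner (A *v Q s) g = 0" using cAQ yk by (cases "s < k") auto
  qed
  finally have cAx: "cinner (A *v x) g = 0" .
  have cb: "cinner b g = \<beta> * cinner (Q 0) g" by (subst b0) (simp add: cinner_scale_left)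
  then have cb': "cinner b g = \<beta>" using cg[of 0] v0 by simp
  have cres: "cinner (b - A *v x) g = \<beta>" using cb' cAx by (simp add: cinner_diff_left)
  have "cinner g g = (\<Sum>s\<le>k. cnj (v s) * cinner (Q s) g)"
    by (subst (1) g_def) (simp add: cinner_sum_left cinner_scale_left)
  also have "\<dots> = (\<Sum>s\<le>k. complex_of_real ((cmod (v s))^2))"
  proof (intro sum.cong refl)
    fix s assume "s \<in> {..k}"
    then have "cinner (Q s) g = v s" using cg by simp
    then show "cnj (v s) * cinner (Q s) g = complex_of_real ((cmod (v s))^2)"
      using cnj_mult_self[of "v s"] by simp
  qed
  also have "\<dots> = complex_of_real (\<Sum>s\<le>k. (cmod (v s))^2)" by (rule of_real_sum[symmetric])
  finally have "complex_of_real ((norm g)^2) = complex_of_real (\<Sum>s\<le>k. (cmod (v s))^2)"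
    using cinner_self[of g] by simp
  then have ng2: "(norm g)^2 = (\<Sum>s\<le>k. (cmod (v s))^2)" using of_real_eq_iff by blast
  have "(\<Sum>s\<le>k. (cmod (v s))^2) \<le> (\<Sum>s\<le>k. (cmod (v J))^2)"
    by (intro sum_mono power_mono) (auto simp: vmax)
  also have "\<dots> = real (k+1) * (cmod (v J))^2" by simp
  finally have "(norm g)^2 \<le> real (k+1) * (cmod (v J))^2" using ng2 by simp
  then have "norm g \<le> sqrt (real (k+1) * (cmod (v J))^2)" by (rule real_le_rsqrt)
  also have "\<dots> = sqrt (real (k+1)) * cmod (v J)" by (simp add: real_sqrt_mult)
  finally have ng: "norm g \<le> sqrt (real (k+1)) * cmod (v J)" .
  have "norm b = cmod (cinner (b - A *v x) g)" using cres \<beta>_def by simp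
  also have "\<dots> \<le> norm (b - A *v x) * norm g" by (rule cinner_cs)
  also have "\<dots> \<le> norm (b - A *v x) * (sqrt (real (k+1)) * cmod (v J))"
    using ng by (intro mult_left_mono) auto
  finally have main: "norm b \<le> norm (b - A *v x) * (sqrt (real (k+1)) * cmod (v J))" .
  have "cmod (v J) \<ge> 1" using vmax v0 by (metis norm_one zero_le)
  then have pos: "sqrt (real (k+1)) * cmod (v J) > 0" by (intro mult_pos_pos) auto
  show ?thesis using main pos by (simp add: pos_divide_le_eq)
qed

theorem theorem2p1:
  fixes A :: "complex^'n^'n" and b :: "complex^'n" and k :: nat
    and Q :: "nat \<Rightarrow> complex^'n" and H :: "nat \<Rightarrow> nat \<Rightarrow> complex"
  assumes "b \<noteq> 0"
    and "k \<ge> 1"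
    and "krylov_full_dim A b (k + 1)"
    and "arnoldi A b k Q H"
  shows "(MIN j\<in>{0..k}. fom_resnorm A b Q H j)
           \<le> ereal (sqrt (real (k + 1)) * gmres_resnorm A b k)"
proof -
  note U = arnoldi_unpack[OF assms(4) assms(1)]
  note hess = U(3) and hsub = U(4)
  obtain v where v: "v 0 = 1" "\<forall>c<k. (\<Sum>r\<le>Suc c. v r * H r c) = 0"
    using v_exists[of k H k, OF hsub order_refl] by auto
  have vrel: "\<forall>c<k. (\<Sum>r\<le>k. v r * H r c) = 0"
  proof (intro allI impI)
    fix c assume c: "c < k"
    have "(\<Sum>r\<le>k. v r * H r c) = (\<Sum>r\<le>Suc c. v r * H r c)"
      by (rule sum.mono_neutral_right) (use c hess in auto)
    then show "(\<Sum>r\<le>k. v r * H r c) = 0" using v(2) c by simp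
  qed
  define m where "m = Max ((\<lambda>r. cmod (v r)) ` {..k})"
  have "m \<in> (\<lambda>r. cmod (v r)) ` {..k}" unfolding m_def by (intro Max_in) auto
  then obtain J where J0: "J \<le> k" "m = cmod (v J)" by auto
  have "\<forall>r\<le>k. cmod (v r) \<le> m" unfolding m_def by auto
  then have vmax: "\<forall>r\<le>k. cmod (v r) \<le> cmod (v J)" using J0 by simp
  have vJpos: "cmod (v J) \<ge> 1" using vmax v(1) by (metis norm_one zero_le)
  then have vJ: "v J \<noteq> 0" by auto
  have fJ: "fom_resnorm A b Q H J = ereal (norm b / cmod (v J))"
  proof (cases "J = 0")
    case True then show ?thesis using v(1) by (simp add: fom_resnorm_def)
  next
    case False then show ?thesis using fom_J[OF assms(4) assms(1) v(1) vrel _ J0(1) vJ] by auto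
  qed
  define L where "L = norm b / (sqrt (real (k+1)) * cmod (v J))"
  have "0 \<in> krylov A b k" unfolding krylov_def
    by (simp, rule exI[of _ "\<lambda>_. 0"], simp add: Finite_Cartesian_Product.vec_eq_iff)
  then have ne: "(\<lambda>x. norm (b - A *v x)) ` krylov A b k \<noteq> {}" by blast
  have "L \<le> gmres_resnorm A b k" unfolding gmres_resnorm_def
  proof (rule cInf_greatest[OF ne])
    fix r assume "r \<in> (\<lambda>x. norm (b - A *v x)) ` krylov A b k"
    then obtain x where x: "x \<in> krylov A b k" "r = norm (b - A *v x)" by blast
    show "L \<le> r" unfolding L_def x(2) by (rule gmres_bound[OF assms(4) assms(1) v(1) vrel J0(1) vmax x(1)])
  qed
  then have m: "sqrt (real (k+1)) * L \<le> sqrt (real (k+1)) * gmres_resnorm A b k"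
    by (intro mult_left_mono) auto
  have e: "sqrt (real (k+1)) * L = norm b / cmod (v J)" unfolding L_def using vJ by simp
  have le: "norm b / cmod (v J) \<le> sqrt (real (k+1)) * gmres_resnorm A b k"
    using m by (simp only: e)
  have "(MIN j\<in>{0..k}. fom_resnorm A b Q H j) \<le> fom_resnorm A b Q H J"
    using J0(1) by (intro Min_le) auto
  also have "\<dots> \<le> ereal (sqrt (real (k + 1)) * gmres_resnorm A b k)" using fJ le by simp
  finally show ?thesis .
qed

end
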